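(* Let $q$ be a prime power and $k\ge3$, $h$ integers with $2\le h\le q$, and $1\le u_0<u_1\le\dots\le u_h$ integers. Let $U_0,U_1,\dots,U_h$ be subspaces of $\mathbf F_q^k$ of dimensions $u_0,u_1,\dots,u_h$ with $U_i\cap U_j=U_0$ for all distinct $i,j\in\{1,\dots,h\}$, and assume $q^k-q^{k-1}>q^{u_0}-1+\sum_{i=1}^h(q^{u_i}-q^{u_0})$. Let $U$ be the set of nonzero vectors of $\mathbf F_q^k$ not in $U_1\cup\dots\cup U_h$, let $\widetilde G$ be a matrix whose columns consist of exactly one representative of each class $\{\lambda\mathbf v:\lambda\in\mathbf F_q^*\}$, $\mathbf v\in U$, and let $\mathbf C$ be the linear code with generator matrix $\widetilde G$. If $u_1>(h-1)\frac{q^{u_0}-1}{q-1}$, then $\mathbf C$ is distance optimal.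
   Context: A linear $[n,k,d]_q$ code is distance optimal if no linear $[n,k,d+1]_q$ code exists. *)

theory Defs
  imports Complex_Main "HOL-Library.Function_Algebras"
begin

text \<open>Vectors over a field 'a are modelled as functions nat \<Rightarrow> 'a; the space
  F_q^n is the set of such functions supported in the coordinates 0..n-1.\<close>

definition fvec :: "nat \<Rightarrow> (nat \<Rightarrow> 'a::zero) set" where
  "fvec n = {v. \<forall>i\<ge>n. v i = 0}"

definition fscale :: "'a::field \<Rightarrow> (nat \<Rightarrow> 'a) \<Rightarrow> (nat \<Rightarrow> 'a)" where
  "fscale c v = (\<lambda>i. c * v i)"

interpretation fv: vector_space "fscale :: 'a::field \<Rightarrow> (nat \<Rightarrow> 'a) \<Rightarrow> (nat \<Rightarrow> 'a)"
  by unfold_locales (auto simp: fscale_def fun_eq_iff algebra_simps)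

definition dotp :: "nat \<Rightarrow> (nat \<Rightarrow> 'a::comm_ring) \<Rightarrow> (nat \<Rightarrow> 'a) \<Rightarrow> 'a" where
  "dotp k x y = (\<Sum>i<k. x i * y i)"

definition hweight :: "(nat \<Rightarrow> 'a::zero) \<Rightarrow> nat" where
  "hweight v = card {i. v i \<noteq> 0}"

definition min_dist :: "(nat \<Rightarrow> 'a::zero) set \<Rightarrow> nat" where
  "min_dist C = Min (hweight ` (C - {0}))"

definition linear_code :: "nat \<Rightarrow> (nat \<Rightarrow> 'a::field) set \<Rightarrow> bool" where
  "linear_code n C \<longleftrightarrow> C \<subseteq> fvec n \<and> fv.subspace C"

definition is_nkd_code :: "nat \<Rightarrow> nat \<Rightarrow> nat \<Rightarrow> (nat \<Rightarrow> 'a::field) set \<Rightarrow> bool" where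
  "is_nkd_code n k d C \<longleftrightarrow> linear_code n C \<and> fv.dim C = k \<and> min_dist C = d"

definition distance_optimal :: "nat \<Rightarrow> (nat \<Rightarrow> 'a::field) set \<Rightarrow> bool" where
  "distance_optimal n C \<longleftrightarrow> linear_code n C \<and>
     \<not> (\<exists>C' :: (nat \<Rightarrow> 'a) set. is_nkd_code n (fv.dim C) (min_dist C + 1) C')"

text \<open>The code generated by the matrix whose columns are the list cols (each in F_q^k):
  all vectors x^T G for x in F_q^k.\<close>
definition gen_code :: "nat \<Rightarrow> (nat \<Rightarrow> 'a::field) list \<Rightarrow> (nat \<Rightarrow> 'a) set" where
  "gen_code k cols = {(\<lambda>j. if j < length cols then dotp k x (cols ! j) else 0) | x. x \<in> fvec k}"

end

theory Submission
  imports Defs "HOL-Library.FuncSet"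
begin

lemma fscale_apply: "fscale c v i = c * v i"
  by (simp add: fscale_def)

lemma fscale_zero_right: "fscale a 0 = 0"
  by (simp add: fscale_def fun_eq_iff)

lemma card_span_indep:
  fixes B :: "(nat \<Rightarrow> 'a::{finite,field}) set"
  assumes "finite B" "fv.independent B"
  shows "card (fv.span B) = card (UNIV::'a set) ^ card B"
  using assms
proof (induction B rule: finite_induct)
  case empty
  then show ?case by (simp add: fv.span_empty)
next
  case (insert b B)
  have ind: "fv.independent B" and nb: "b \<notin> fv.span B"
    using insert.prems insert.hyps(2) by (auto simp: fv.independent_insert)
  have eq: "fv.span (insert b B) = (\<lambda>(a,w). fscale a b + w) ` (UNIV \<times> fv.span B)"
  proof (rule set_eqI, rule iffI)
    fix x assume "x \<in> fv.span (insert b B)"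
    then obtain a where "x - fscale a b \<in> fv.span B" using fv.span_insert by blast
    then show "x \<in> (\<lambda>(a,w). fscale a b + w) ` (UNIV \<times> fv.span B)"
      by (auto intro!: image_eqI[where x="(a, x - fscale a b)"])
  next
    fix x assume "x \<in> (\<lambda>(a,w). fscale a b + w) ` (UNIV \<times> fv.span B)"
    then obtain a w where "x = fscale a b + w" "w \<in> fv.span B" by auto
    then show "x \<in> fv.span (insert b B)" by (simp add: fv.span_insert, intro exI[of _ a], simp)
  qed
  have inj: "inj_on (\<lambda>(a,w). fscale a b + w) (UNIV \<times> fv.span B)"
  proof (rule inj_onI, clarify)
    fix a w a' w' assume w: "w \<in> fv.span B" "w' \<in> fv.span B"
      and e: "fscale a b + w = fscale a' b + w'"
    show "a = a' \<and> w = w'"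
    proof (cases "a = a'")
      case True then show ?thesis using e by simp
    next
      case False
      have h: "\<And>x. w' x - w x = (a - a') * b x" using e
        by (auto simp: fun_eq_iff algebra_simps fscale_apply)
      hence "fscale (inverse (a - a')) (w' - w) = b" using False
        by (simp add: fun_eq_iff fscale_apply h)
      moreover have "fscale (inverse (a - a')) (w' - w) \<in> fv.span B"
        using w by (simp add: fv.span_diff fv.span_scale)
      ultimately show ?thesis using nb by simp
    qed
  qed
  have "card (fv.span (insert b B)) = card ((UNIV::'a set) \<times> fv.span B)"
    unfolding eq using inj by (simp add: card_image)
  also have "\<dots> = card (UNIV::'a set) * card (UNIV::'a set) ^ card B" using insert ind by (simp add: card_cartesian_product)
  finally show ?case using insert by simp
qed

lemma card_subspace:
  fixes S :: "(nat \<Rightarrow> 'a::{finite,field}) set"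
  assumes "fv.subspace S" "finite S"
  shows "card S = card (UNIV::'a set) ^ fv.dim S"
proof -
  obtain B where B: "B \<subseteq> S" "fv.independent B" "S \<subseteq> fv.span B" "card B = fv.dim S"
    using fv.basis_exists by blast
  have "fv.span B = S" using B assms fv.span_subspace by blast
  moreover have "finite B" using B assms finite_subset by blast
  ultimately show ?thesis using card_span_indep[of B] B by simp
qed

definition sfun :: "nat set \<Rightarrow> (nat \<Rightarrow> 'a::zero) set" where
  "sfun I = {v. \<forall>i. i \<notin> I \<longrightarrow> v i = 0}"

lemma fvec_sfun: "fvec k = sfun {..<k}"
  by (auto simp: fvec_def sfun_def)

lemma sfun_bij:
  "bij_betw (\<lambda>v. restrict v I) (sfun I :: (nat \<Rightarrow> 'a::zero) set) (PiE I (\<lambda>_. UNIV :: 'a set))"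
proof (rule bij_betw_byWitness[where f'="\<lambda>f i. if i \<in> I then f i else 0"])
  show "\<forall>a\<in>sfun I. (\<lambda>i. if i \<in> I then restrict a I i else 0) = a"
    by (auto simp: sfun_def fun_eq_iff)
  show "\<forall>a'\<in>PiE I (\<lambda>_. UNIV :: 'a set). restrict (\<lambda>i. if i \<in> I then a' i else 0) I = a'"
  proof
    fix a' assume a': "a' \<in> PiE I (\<lambda>_. UNIV :: 'a set)"
    have "restrict (\<lambda>i. if i \<in> I then a' i else 0) I = restrict a' I" by (rule restrict_ext) simp
    also have "\<dots> = a'" using a' by (rule PiE_restrict)
    finally show "restrict (\<lambda>i. if i \<in> I then a' i else 0) I = a'" .
  qed
  show "(\<lambda>v. restrict v I) ` sfun I \<subseteq> PiE I (\<lambda>_. UNIV :: 'a set)" by auto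
  show "(\<lambda>f i. if i \<in> I then f i else 0) ` PiE I (\<lambda>_. UNIV :: 'a set) \<subseteq> (sfun I :: (nat \<Rightarrow> 'a) set)"
    by (auto simp: sfun_def)
qed

lemma sfun_finite: "finite I \<Longrightarrow> finite (sfun I :: (nat \<Rightarrow> 'a::{finite,zero}) set)"
proof -
  assume "finite I"
  hence "finite (PiE I (\<lambda>_. UNIV :: 'a set))" by (intro finite_PiE) auto
  moreover have "bij_betw (\<lambda>v. restrict v I) (sfun I :: (nat\<Rightarrow>'a) set) (PiE I (\<lambda>_. UNIV::'a set))" by (rule sfun_bij)
  ultimately show ?thesis using bij_betw_finite by blast
qed

lemma card_sfun: "finite I \<Longrightarrow> card (sfun I :: (nat \<Rightarrow> 'a::{finite,zero}) set) = card (UNIV::'a set) ^ card I"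
proof -
  assume "finite I"
  have "card (sfun I :: (nat \<Rightarrow> 'a) set) = card (PiE I (\<lambda>_. UNIV :: 'a set))"
    using sfun_bij[of I] by (rule bij_betw_same_card)
  also have "\<dots> = card (UNIV::'a set) ^ card I" using \<open>finite I\<close> by (simp add: card_PiE)
  finally show ?thesis .
qed

lemma finite_fvec: "finite (fvec k :: (nat \<Rightarrow> 'a::{finite,zero}) set)"
  by (simp add: fvec_sfun sfun_finite)

lemma card_fvec: "card (fvec k :: (nat \<Rightarrow> 'a::{finite,zero}) set) = card (UNIV::'a set) ^ k"
  by (simp add: fvec_sfun card_sfun)

lemma dotp_add: "dotp k x (v + w) = dotp k x v + dotp k x w"
  by (simp add: dotp_def algebra_simps sum.distrib)
lemma dotp_diff: "dotp k x (v - w) = dotp k x v - dotp k x (w::nat\<Rightarrow>'a::comm_ring)"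
  by (simp add: dotp_def algebra_simps sum_subtractf)
lemma dotp_scale: "dotp k x (fscale c v) = c * dotp k x v"
  by (simp add: dotp_def fscale_apply sum_distrib_left algebra_simps)

lemma card_kernel:
  fixes S :: "(nat \<Rightarrow> 'a::{finite,field}) set"
  assumes S: "fv.subspace S" and w: "w \<in> S" "dotp k x w \<noteq> 0"
  shows "card S = card (UNIV::'a set) * card {v\<in>S. dotp k x v = 0}"
proof -
  let ?K = "{v\<in>S. dotp k x v = 0}"
  let ?f = "\<lambda>(z, t). z + fscale (t / dotp k x w) w"
  have "bij_betw ?f (?K \<times> UNIV) S"
  proof (rule bij_betw_byWitness[where f'="\<lambda>v. (v - fscale (dotp k x v / dotp k x w) w, dotp k x v)"])
    show "\<forall>a\<in>?K \<times> UNIV. (\<lambda>v. (v - fscale (dotp k x v / dotp k x w) w, dotp k x v)) (?f a) = a"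
      using w by (auto simp: dotp_add dotp_scale)
    show "\<forall>a'\<in>S. ?f (a' - fscale (dotp k x a' / dotp k x w) w, dotp k x a') = a'"
      by auto
    show "?f ` (?K \<times> UNIV) \<subseteq> S"
      using S w by (auto intro!: fv.subspace_add fv.subspace_scale)
    show "(\<lambda>v. (v - fscale (dotp k x v / dotp k x w) w, dotp k x v)) ` S \<subseteq> ?K \<times> UNIV"
      using S w by (auto intro!: fv.subspace_diff fv.subspace_scale simp: dotp_diff dotp_scale)
  qed
  hence "card S = card (?K \<times> (UNIV::'a set))" by (simp add: bij_betw_same_card)
  thus ?thesis by (simp add: card_cartesian_product)
qed

lemma card_field_ge2: "2 \<le> card (UNIV::'a::{finite,field} set)"
proof -
  have "card {0::'a, 1} \<le> card (UNIV::'a set)" by (rule card_mono) auto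
  thus ?thesis by simp
qed

lemma sum_card_swap:
  assumes "finite A" "finite S"
  shows "(\<Sum>a\<in>A. card {i\<in>S. P a i}) = (\<Sum>i\<in>S. card {a\<in>A. P a i})"
proof -
  have "(\<Sum>a\<in>A. card {i\<in>S. P a i}) = (\<Sum>a\<in>A. \<Sum>i\<in>S. if P a i then 1 else 0)"
    using assms by (simp add: sum.inter_filter[symmetric])
  also have "\<dots> = (\<Sum>i\<in>S. \<Sum>a\<in>A. if P a i then 1 else 0)" by (rule sum.swap)
  also have "\<dots> = (\<Sum>i\<in>S. card {a\<in>A. P a i})"
    using assms by (simp add: sum.inter_filter[symmetric])
  finally show ?thesis .
qed

lemma hweight_finite: "v \<in> sfun I \<Longrightarrow> finite I \<Longrightarrow> finite {i. v i \<noteq> 0}"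
  by (rule finite_subset[of _ I]) (auto simp: sfun_def)

lemma griesmer:
  fixes C :: "(nat \<Rightarrow> 'a::{finite,field}) set"
  assumes "finite I" "fv.subspace C" "C \<subseteq> sfun I" "card C = card (UNIV::'a set) ^ m"
    "\<forall>v\<in>C-{0}. D \<le> real (hweight v)"
  shows "(\<Sum>j<m. ceiling (D / real (card (UNIV::'a set)) ^ j)) \<le> int (card I)"
  using assms
proof (induction m arbitrary: C I D)
  case 0
  then show ?case by simp
next
  case (Suc m)
  define q where "q = card (UNIV::'a set)"
  have q2: "2 \<le> q" unfolding q_def by (rule card_field_ge2)
  note CS = Suc.prems(2)
  have finC: "finite C" using finite_subset[OF Suc.prems(3) sfun_finite[OF Suc.prems(1)]] .
  have "C - {0} \<noteq> {}"
  proof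
    assume "C - {0} = {}"
    hence "C \<subseteq> {0}" by blast
    hence "card C \<le> 1" using card_mono[of "{0}" C] by simp
    moreover have "q ^ Suc m \<ge> 2"
    proof -
      have "1 \<le> q ^ m" using q2 by simp
      hence "q * 1 \<le> q * q ^ m" by (rule mult_le_mono2)
      thus ?thesis using q2 by (simp only: power_Suc)
    qed
    ultimately show False using Suc.prems(4) q_def by simp
  qed
  hence "Min (hweight ` (C - {0})) \<in> hweight ` (C - {0})" using finC by (intro Min_in) auto
  then obtain c where c: "c \<in> C - {0}" "hweight c = Min (hweight ` (C - {0}))"
    by (metis (no_types, lifting) imageE)
  have cmin: "\<forall>v\<in>C-{0}. hweight c \<le> hweight v" using c finC by simp
  define S where "S = {i. c i \<noteq> 0}"
  have SI: "S \<subseteq> I" using c Suc.prems(3) by (auto simp: S_def sfun_def)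
  have finS: "finite S" using SI Suc.prems(1) finite_subset by blast
  have hc: "hweight c = card S" by (simp add: hweight_def S_def)
  obtain i0 where i0: "i0 \<in> S" using c by (auto simp: S_def fun_eq_iff)
  define I' where "I' = I - S"
  define res where "res = (\<lambda>v::nat\<Rightarrow>'a. \<lambda>i. if i \<in> I' then v i else 0)"
  define R where "R = res ` C"
  have res_add: "\<And>v w. res (v + w) = res v + res w" by (auto simp: res_def fun_eq_iff)
  have res_diff: "\<And>v w. res (v - w) = res v - res w" by (auto simp: res_def fun_eq_iff)
  have res_scale: "\<And>a v. res (fscale a v) = fscale a (res v)" by (auto simp: res_def fun_eq_iff fscale_apply)
  have res_c: "res c = 0" by (auto simp: res_def fun_eq_iff I'_def S_def)
  have res0: "res 0 = 0" by (auto simp: res_def fun_eq_iff)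
  have RS: "fv.subspace R"
    unfolding fv.subspace_def R_def
  proof (intro conjI ballI allI)
    show "0 \<in> res ` C" using res0 fv.subspace_0[OF CS] by force
  next
    fix x y assume "x \<in> res ` C" "y \<in> res ` C"
    then obtain v w where "v \<in> C" "w \<in> C" "x = res v" "y = res w" by auto
    thus "x + y \<in> res ` C" using res_add fv.subspace_add[OF CS] by (auto intro!: image_eqI[where x="v+w"])
  next
    fix a x assume "x \<in> res ` C"
    then obtain v where "v \<in> C" "x = res v" by auto
    thus "fscale a x \<in> res ` C" using res_scale fv.subspace_scale[OF CS] by (auto intro!: image_eqI[where x="fscale a v"])
  qed
  have RI: "R \<subseteq> sfun I'" by (auto simp: R_def res_def sfun_def)
  have mult_c: "\<And>d. d \<in> C \<Longrightarrow> res d = 0 \<Longrightarrow> d = fscale (d i0 / c i0) c"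
  proof -
    fix d assume d: "d \<in> C" "res d = 0"
    define e where "e = d - fscale (d i0 / c i0) c"
    have eC: "e \<in> C" unfolding e_def using d c fv.subspace_diff[OF CS] fv.subspace_scale[OF CS] by blast
    have "{i. e i \<noteq> 0} \<subseteq> S - {i0}"
    proof
      fix i assume i: "i \<in> {i. e i \<noteq> 0}"
      have "e \<in> sfun I" using eC Suc.prems(3) by blast
      hence "i \<in> I" using i by (auto simp: sfun_def)
      moreover have "res e = 0" using d res_c by (simp add: e_def res_diff res_scale)
      ultimately have "i \<in> S" using i by (auto simp: res_def fun_eq_iff I'_def split: if_splits)
      moreover have "e i0 = 0" using i0 by (simp add: e_def fscale_apply S_def)
      ultimately show "i \<in> S - {i0}" using i by auto
    qed
    hence "card {i. e i \<noteq> 0} \<le> card (S - {i0})" using finS by (intro card_mono) auto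
    also have "\<dots> < card S" using finS i0 by (rule card_Diff1_less)
    finally have "hweight e < hweight c" by (simp add: hweight_def S_def)
    hence "e = 0" using cmin eC by (meson DiffI not_le singletonD)
    thus "d = fscale (d i0 / c i0) c" by (simp add: e_def)
  qed
  have bij: "bij_betw (\<lambda>v. (res v, v i0)) C (R \<times> UNIV)"
  proof (rule bij_betwI')
    fix v w assume vw: "v \<in> C" "w \<in> C"
    show "((res v, v i0) = (res w, w i0)) = (v = w)"
    proof
      assume e: "(res v, v i0) = (res w, w i0)"
      have "v - w \<in> C" using vw fv.subspace_diff[OF CS] by blast
      moreover have "res (v - w) = 0" using e by (simp add: res_diff)
      ultimately have "v - w = fscale ((v - w) i0 / c i0) c" using mult_c by blast
      also have "\<dots> = 0" using e by (auto simp: fun_eq_iff fscale_apply)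
      finally show "v = w" by simp
    qed simp
  next
    fix v assume "v \<in> C" thus "(res v, v i0) \<in> R \<times> UNIV" by (simp add: R_def)
  next
    fix y assume "y \<in> R \<times> (UNIV :: 'a set)"
    then obtain v t where y: "y = (res v, t)" "v \<in> C" by (auto simp: R_def)
    define v' where "v' = v + fscale ((t - v i0) / c i0) c"
    have "v' \<in> C" unfolding v'_def using y c fv.subspace_add[OF CS] fv.subspace_scale[OF CS] by blast
    moreover have "res v' = res v" by (simp add: v'_def res_add res_scale res_c fscale_zero_right)
    moreover have "v' i0 = t" using i0 by (simp add: v'_def fscale_apply S_def)
    ultimately show "\<exists>x\<in>C. y = (res x, x i0)" using y by (intro bexI[of _ v']) auto
  qed
  hence "card C = card R * q" by (simp add: bij_betw_same_card card_cartesian_product q_def)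
  hence cardR: "card R = q ^ m" using Suc.prems(4) q2 q_def by simp
  have wR: "\<forall>r\<in>R-{0}. D / q \<le> real (hweight r)"
  proof
    fix r assume r: "r \<in> R - {0}"
    then obtain c' where c': "c' \<in> C" "r = res c'" by (auto simp: R_def)
    have c'I: "c' \<in> sfun I" and cI: "c \<in> sfun I" using c' c Suc.prems(3) by auto
    have bound: "card S \<le> card {i\<in>S. c' i + a * c i \<noteq> 0} + hweight r" for a
    proof -
      let ?v = "c' + fscale a c"
      have "?v \<in> C" using c' c fv.subspace_add[OF CS] fv.subspace_scale[OF CS] by blast
      moreover have "?v \<noteq> 0"
      proof
        assume "?v = 0"
        hence "res ?v = 0" using res0 by simp
        hence "r = 0" using c' by (simp add: res_add res_scale res_c fscale_zero_right)
        thus False using r by simp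
      qed
      ultimately have "card S \<le> hweight ?v" using cmin hc by simp
      also have "hweight ?v = card ({i\<in>S. c' i + a * c i \<noteq> 0} \<union> {i. r i \<noteq> 0})"
        unfolding hweight_def
        using c'I cI by (intro arg_cong[where f=card]) (auto simp: c'(2) res_def I'_def S_def sfun_def fscale_apply)
      also have "\<dots> \<le> card {i\<in>S. c' i + a * c i \<noteq> 0} + hweight r"
        unfolding hweight_def by (rule card_Un_le)
      finally show ?thesis .
    qed
    have "(\<Sum>a\<in>(UNIV::'a set). card S) \<le> (\<Sum>a\<in>(UNIV::'a set). card {i\<in>S. c' i + a * c i \<noteq> 0} + hweight r)"
      by (rule sum_mono) (rule bound)
    also have "\<dots> = (\<Sum>i\<in>S. card {a\<in>(UNIV::'a set). c' i + a * c i \<noteq> 0}) + q * hweight r"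
      by (simp add: sum.distrib sum_card_swap finS q_def)
    also have "(\<Sum>i\<in>S. card {a\<in>(UNIV::'a set). c' i + a * c i \<noteq> 0}) = (\<Sum>i\<in>S. q - 1)"
    proof (rule sum.cong[OF refl])
      fix i assume "i \<in> S"
      hence ci: "c i \<noteq> 0" by (simp add: S_def)
      have "\<And>a. c' i + a * c i = 0 \<longleftrightarrow> a = - c' i / c i"
        using ci by (simp only: add_eq_0_iff eq_divide_eq) simp
      hence "{a\<in>(UNIV::'a set). c' i + a * c i \<noteq> 0} = UNIV - {- c' i / c i}" by auto
      thus "card {a\<in>(UNIV::'a set). c' i + a * c i \<noteq> 0} = q - 1" by (simp add: q_def card_Diff_subset)
    qed
    finally have "q * card S \<le> card S * (q - 1) + q * hweight r" by (simp add: q_def)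
    moreover obtain q' where q': "q = Suc q'" using q2 by (cases q) auto
    ultimately have "card S \<le> q * hweight r" by (simp add: algebra_simps)
    hence "real (card S) \<le> real q * real (hweight r)" by (simp add: of_nat_mult[symmetric] del: of_nat_mult)
    moreover have "D \<le> real (card S)"
    proof -
      have "D \<le> real (hweight c)" using Suc.prems(5) c(1) by blast
      thus ?thesis using hc by simp
    qed
    ultimately show "D / q \<le> real (hweight r)" using q2 by (simp add: divide_le_eq mult.commute)
  qed
  have finI': "finite I'" using Suc.prems(1) by (simp add: I'_def)
  have IH: "(\<Sum>j<m. ceiling ((D / q) / real q ^ j)) \<le> int (card I')"
  proof -
    have c1: "card R = card (UNIV::'a set) ^ m" using cardR q_def by simp
    have c2: "\<forall>v\<in>R-{0}. D / real (card (UNIV::'a set)) \<le> real (hweight v)" using wR q_def by simp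
    show ?thesis using Suc.IH[OF finI' RS RI c1 c2] q_def by simp
  qed
  have "(\<Sum>j<Suc m. ceiling (D / real q ^ j)) = ceiling D + (\<Sum>j<m. ceiling ((D / q) / real q ^ j))"
    by (subst sum.lessThan_Suc_shift) (simp add: divide_divide_eq_left)
  also have "\<dots> \<le> int (card S) + int (card I')"
  proof -
    have "D \<le> real (hweight c)" using Suc.prems(5) c(1) by blast
    hence "ceiling D \<le> int (card S)" using hc by (simp add: ceiling_le_iff)
    thus ?thesis using IH by linarith
  qed
  also have "\<dots> = int (card I)" using SI finS Suc.prems(1)
    by (simp add: I'_def card_Diff_subset card_mono)
  finally show ?case by (simp add: q_def)
qed

lemma geom_fwd: "(real q - 1) * (\<Sum>j<m. real q ^ j) = real q ^ m - 1"
proof (induction m)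
  case 0 then show ?case by simp
next
  case (Suc m)
  have "(real q - 1) * (\<Sum>j<Suc m. real q ^ j) = (real q - 1) * (\<Sum>j<m. real q ^ j) + (real q - 1) * real q ^ m"
    by (simp add: distrib_left)
  also have "\<dots> = real q ^ Suc m - 1" using Suc.IH by (simp add: algebra_simps)
  finally show ?case .
qed

lemma geom_rev: "(real q - 1) * (\<Sum>j<m. real q ^ (m - 1 - j)) = real q ^ m - 1"
proof -
  have "(\<Sum>j<m. real q ^ (m - 1 - j)) = (\<Sum>j<m. real q ^ (m - Suc j))" by simp
  also have "\<dots> = (\<Sum>j<m. real q ^ j)" by (rule sum.nat_diff_reindex)
  finally show ?thesis using geom_fwd by simp
qed

lemma sum_if_less:
  fixes m k :: nat
  assumes "m \<le> k"
  shows "(\<Sum>j<k. if j < m then f j else 0) = (\<Sum>j<m. (f j :: real))"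
proof -
  have "(\<Sum>j<k. if j < m then f j else 0) = sum f {j\<in>{..<k}. j < m}"
    by (rule sum.inter_filter[symmetric]) simp_all
  also have "{j\<in>{..<k}. j < m} = {..<m}" using assms by auto
  finally show ?thesis .
qed

lemma term_bound:
  fixes q k h j :: nat and u :: "nat \<Rightarrow> nat" and D :: real
  assumes q2: "2 \<le> q" and hq: "h \<le> q" and ubnd: "\<forall>i\<in>{1..h}. u 1 \<le> u i" and jk: "j < k"
    and Ddef: "D = (real q ^ k - (\<Sum>i=1..h. real q ^ u i)) / real q + 1"
  shows "real_of_int (ceiling (D / real q ^ j)) \<ge>
     real q ^ (k - 1 - j) - (\<Sum>i=1..h. if j < u i then real q ^ (u i - 1 - j) else 0) + (if j < u 1 then 1 else 0)"
proof -
  define Zi :: int where "Zi = int q ^ (k - 1 - j) - (\<Sum>i=1..h. if j < u i then int q ^ (u i - 1 - j) else 0)"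
  have Z: "real_of_int Zi = real q ^ (k - 1 - j) - (\<Sum>i=1..h. if j < u i then real q ^ (u i - 1 - j) else 0)"
    by (simp add: Zi_def of_int_sum) (rule sum.cong[OF refl], simp)
  define E where "E = (\<Sum>i=1..h. if j < u i then 0 else real q ^ u i / real q ^ (j + 1))"
  have qpos: "real q > 0" using q2 by simp
  have pk: "real q ^ k / real q ^ (j + 1) = real q ^ (k - 1 - j)"
  proof -
    have "real q ^ ((k - 1 - j) + (j + 1)) = real q ^ (k - 1 - j) * real q ^ (j + 1)" by (rule power_add)
    moreover have "(k - 1 - j) + (j + 1) = k" using jk by simp
    ultimately have "real q ^ k = real q ^ (k - 1 - j) * real q ^ (j + 1)" by simp
    thus ?thesis using qpos by simp
  qed
  have pu: "real q ^ u i / real q ^ (j + 1) = (if j < u i then real q ^ (u i - 1 - j) else 0)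
            + (if j < u i then 0 else real q ^ u i / real q ^ (j + 1))" for i
  proof (cases "j < u i")
    case True
    have "real q ^ ((u i - 1 - j) + (j + 1)) = real q ^ (u i - 1 - j) * real q ^ (j + 1)" by (rule power_add)
    moreover have "(u i - 1 - j) + (j + 1) = u i" using True by simp
    ultimately have "real q ^ u i = real q ^ (u i - 1 - j) * real q ^ (j + 1)" by simp
    thus ?thesis using qpos True by simp
  qed simp
  have "D / real q ^ j = (real q ^ k - (\<Sum>i=1..h. real q ^ u i)) / real q ^ (j + 1) + 1 / real q ^ j"
    using qpos by (simp add: Ddef add_divide_distrib divide_divide_eq_left)
  also have "\<dots> = real q ^ k / real q ^ (j + 1) - (\<Sum>i=1..h. real q ^ u i / real q ^ (j + 1)) + 1 / real q ^ j"
    by (simp add: diff_divide_distrib sum_divide_distrib)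
  also have "\<dots> = real_of_int Zi - E + 1 / real q ^ j"
  proof -
    have sumeq: "(\<Sum>i=1..h. real q ^ u i / real q ^ (j + 1)) = (\<Sum>i=1..h. if j < u i then real q ^ (u i - 1 - j) else 0) + E"
      unfolding E_def by (subst sum.distrib[symmetric]) (rule sum.cong[OF refl], rule pu)
    show ?thesis unfolding pk sumeq Z by simp
  qed
  finally have eq: "D / real q ^ j = real_of_int Zi - E + 1 / real q ^ j" .
  have Ele: "E \<le> 1"
  proof -
    have "E \<le> (\<Sum>i=1..h. 1 / real q)"
      unfolding E_def
    proof (rule sum_mono)
      fix i assume "i \<in> {1..h}"
      show "(if j < u i then 0 else real q ^ u i / real q ^ (j + 1)) \<le> 1 / real q"
      proof (cases "j < u i")
        case False
        hence "real q ^ u i \<le> real q ^ j" using q2 by (intro power_increasing) auto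
        hence "real q ^ u i / real q ^ (j + 1) \<le> real q ^ j / real q ^ (j + 1)"
          using qpos by (intro divide_right_mono) auto
        also have "\<dots> = 1 / real q" using qpos by simp
        finally show ?thesis using False by simp
      qed (use qpos in simp)
    qed
    also have "\<dots> = real h / real q" by simp
    also have "\<dots> \<le> 1" using hq qpos by simp
    finally show ?thesis .
  qed
  have ppos: "1 / real q ^ j > 0" using qpos by simp
  show ?thesis
  proof (cases "j < u 1")
    case True
    have "E = 0" unfolding E_def using True ubnd by (intro sum.neutral) (auto dest: bspec)
    hence "real_of_int (Zi + 1) - 1 < D / real q ^ j" using eq ppos by simp
    hence "Zi + 1 \<le> ceiling (D / real q ^ j)" by (simp add: le_ceiling_iff)
    hence "real_of_int (Zi + 1) \<le> real_of_int (ceiling (D / real q ^ j))" by (simp only: of_int_le_iff)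
    thus ?thesis using True Z by simp
  next
    case False
    have "real_of_int Zi - 1 < D / real q ^ j" using eq ppos Ele by linarith
    hence "Zi \<le> ceiling (D / real q ^ j)" by (simp add: le_ceiling_iff)
    hence "real_of_int Zi \<le> real_of_int (ceiling (D / real q ^ j))" by (simp only: of_int_le_iff)
    thus ?thesis using False Z by simp
  qed
qed


lemma griesmer_arith:
  fixes q k h :: nat and u :: "nat \<Rightarrow> nat" and D :: real
  assumes q2: "2 \<le> q" and hq: "h \<le> q" and ubnd: "\<forall>i\<in>{1..h}. u 1 \<le> u i \<and> u i \<le> k" and u1k: "u 1 \<le> k"
    and Ddef: "D = (real q ^ k - (\<Sum>i=1..h. real q ^ u i)) / real q + 1"
  shows "(real q - 1) * (\<Sum>j<k. real_of_int (ceiling (D / real q ^ j))) \<ge>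
     real q ^ k - 1 - (\<Sum>i=1..h. (real q ^ u i - 1)) + (real q - 1) * real (u 1)"
proof -
  define A where "A = (\<Sum>j<k. real q ^ (k - 1 - j))"
  define B where "B = (\<Sum>i=1..h. \<Sum>j<u i. real q ^ (u i - 1 - j))"
  have "(\<Sum>j<k. real q ^ (k - 1 - j) - (\<Sum>i=1..h. if j < u i then real q ^ (u i - 1 - j) else 0) + (if j < u 1 then 1 else 0))
        \<le> (\<Sum>j<k. real_of_int (ceiling (D / real q ^ j)))"
    by (rule sum_mono, rule term_bound[OF q2 hq _ _ Ddef]) (use ubnd in auto)
  moreover have "(\<Sum>j<k. real q ^ (k - 1 - j) - (\<Sum>i=1..h. if j < u i then real q ^ (u i - 1 - j) else 0) + (if j < u 1 then 1 else 0))
        = A - B + real (u 1)"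
  proof -
    have e1: "(\<Sum>j<k. (\<Sum>i=1..h. if j < u i then real q ^ (u i - 1 - j) else 0)) = B"
      unfolding B_def by (subst sum.swap) (rule sum.cong[OF refl], rule sum_if_less, use ubnd in auto)
    have e2: "(\<Sum>j<k. (if j < u 1 then 1 else 0::real)) = real (u 1)"
      using sum_if_less[OF u1k, of "\<lambda>_. 1"] by simp
    show ?thesis unfolding A_def by (simp only: sum.distrib sum_subtractf e1 e2)
  qed
  ultimately have le: "A - B + real (u 1) \<le> (\<Sum>j<k. real_of_int (ceiling (D / real q ^ j)))" by simp
  have q1: "real q - 1 \<ge> 0" using q2 by simp
  have "(real q - 1) * (A - B + real (u 1)) \<le> (real q - 1) * (\<Sum>j<k. real_of_int (ceiling (D / real q ^ j)))"
    using le q1 by (rule mult_left_mono)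
  moreover have "(real q - 1) * (A - B + real (u 1)) = (real q - 1) * A - (real q - 1) * B + (real q - 1) * real (u 1)"
    by (simp add: algebra_simps)
  moreover have "(real q - 1) * A = real q ^ k - 1" unfolding A_def by (rule geom_rev)
  moreover have "(real q - 1) * B = (\<Sum>i=1..h. (real q ^ u i - 1))"
    unfolding B_def by (subst sum_distrib_left) (rule sum.cong[OF refl], rule geom_rev)
  ultimately show ?thesis by simp
qed

lemma card_nonkernel:
  fixes S :: "(nat \<Rightarrow> 'a::{finite,field}) set"
  assumes S: "fv.subspace S" "finite S" and w: "w \<in> S" "dotp k x w \<noteq> 0"
  shows "card (UNIV::'a set) * card {v\<in>S. dotp k x v \<noteq> 0} = (card (UNIV::'a set) - 1) * card S"
proof -
  define q where "q = card (UNIV::'a set)"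
  define K where "K = {v\<in>S. dotp k x v = 0}"
  have ck: "card S = q * card K" using card_kernel[OF S(1) w] by (simp add: q_def K_def)
  have "{v\<in>S. dotp k x v \<noteq> 0} = S - K" by (auto simp: K_def)
  hence "card {v\<in>S. dotp k x v \<noteq> 0} = card S - card K"
    using S(2) by (simp add: card_Diff_subset K_def)
  hence "q * card {v\<in>S. dotp k x v \<noteq> 0} = q * (q * card K - card K)" using ck by simp
  also have "\<dots> = (q - 1) * (q * card K)" by (simp add: diff_mult_distrib diff_mult_distrib2)
  finally show ?thesis using ck by (simp add: q_def)
qed

lemma nonkernel_le:
  fixes S :: "(nat \<Rightarrow> 'a::{finite,field}) set"
  assumes S: "fv.subspace S" "finite S"
  shows "card (UNIV::'a set) * card {v\<in>S. dotp k x v \<noteq> 0} \<le> (card (UNIV::'a set) - 1) * card S"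
proof (cases "\<exists>w\<in>S. dotp k x w \<noteq> 0")
  case True
  then obtain w where "w \<in> S" "dotp k x w \<noteq> 0" by blast
  then show ?thesis using card_nonkernel[OF S] by simp
next
  case False
  hence "{v\<in>S. dotp k x v \<noteq> 0} = {}" by blast
  then show ?thesis by (simp only: card.empty mult_0_right)
qed

lemma fscale_fscale: "fscale a (fscale b v) = fscale (a * b) v"
  by (simp add: fscale_def mult.assoc)
lemma fscale_one: "fscale 1 v = v"
  by (simp add: fscale_def)

lemma weight_count:
  fixes cols :: "(nat \<Rightarrow> 'a::{finite,field}) list" and Out :: "(nat \<Rightarrow> 'a) set"
  assumes cin: "\<forall>c\<in>set cols. c \<in> Out"
    and crep: "\<forall>v\<in>Out. \<exists>!j. j < length cols \<and> (\<exists>c::'a. c \<noteq> 0 \<and> cols ! j = fscale c v)"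
    and cl: "\<forall>v\<in>Out. \<forall>c::'a. c \<noteq> 0 \<longrightarrow> fscale c v \<in> Out"
    and n0: "0 \<notin> Out"
    and P: "\<forall>v (c::'a). c \<noteq> 0 \<longrightarrow> P (fscale c v) = P v"
  shows "card {v\<in>Out. P v} = card {j. j < length cols \<and> P (cols ! j)} * (card (UNIV::'a set) - 1)"
proof -
  let ?J = "{j. j < length cols \<and> P (cols ! j)}"
  let ?f = "\<lambda>(j, c::'a). fscale c (cols ! j)"
  have inj: "inj_on ?f (?J \<times> (UNIV - {0}))"
  proof (rule inj_onI)
    fix a b assume a: "a \<in> ?J \<times> (UNIV - {0})" and b: "b \<in> ?J \<times> (UNIV - {0})" and e: "?f a = ?f b"
    obtain j c where ajc: "a = (j, c)" by (cases a)
    obtain j' c' where bjc: "b = (j', c')" by (cases b)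
    have j: "j < length cols" and c: "c \<noteq> 0" using a ajc by auto
    have j': "j' < length cols" and c': "c' \<noteq> 0" using b bjc by auto
    have e': "fscale c (cols ! j) = fscale c' (cols ! j')" using e ajc bjc by simp
    define v where "v = fscale c (cols ! j)"
    have colsj: "cols ! j \<in> Out" using cin j nth_mem by blast
    have vO: "v \<in> Out" using cl colsj c v_def by blast
    have "cols ! j = fscale (inverse c) v" using c by (simp add: v_def fscale_fscale fscale_one)
    hence p1: "j < length cols \<and> (\<exists>c. c \<noteq> 0 \<and> cols ! j = fscale c v)" using j c
      using inverse_nonzero_iff_nonzero[of c] by blast
    have "cols ! j' = fscale (inverse c') v" using c' e' by (simp add: v_def fscale_fscale fscale_one)
    hence p2: "j' < length cols \<and> (\<exists>c. c \<noteq> 0 \<and> cols ! j' = fscale c v)" using j' c'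
      using inverse_nonzero_iff_nonzero[of c'] by blast
    have u: "\<exists>!j. j < length cols \<and> (\<exists>c. c \<noteq> 0 \<and> cols ! j = fscale c v)" using crep vO by blast
    have jj: "j = j'" using u p1 p2 by blast
    have "cols ! j \<noteq> 0" using colsj n0 by auto
    then obtain i where i: "(cols ! j) i \<noteq> 0" by (auto simp: fun_eq_iff)
    have "c * (cols ! j) i = c' * (cols ! j) i" using e' jj fun_cong[OF e', of i] by (simp add: fscale_apply)
    hence "c = c'" using i by simp
    thus "a = b" using ajc bjc jj by simp
  qed
  have img: "?f ` (?J \<times> (UNIV - {0})) = {v\<in>Out. P v}"
  proof (rule set_eqI, rule iffI)
    fix v assume "v \<in> ?f ` (?J \<times> (UNIV - {0}))"
    then obtain j c where v: "v = fscale c (cols ! j)" "j < length cols" "P (cols ! j)" "c \<noteq> 0" by auto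
    have "cols ! j \<in> Out" using cin v(2) nth_mem by blast
    hence "v \<in> Out" using cl v by blast
    moreover have "P v" using P v by simp
    ultimately show "v \<in> {v\<in>Out. P v}" by simp
  next
    fix v assume v: "v \<in> {v\<in>Out. P v}"
    then obtain j c where jc: "j < length cols" "c \<noteq> 0" "cols ! j = fscale c v" using crep by blast
    have "P (cols ! j)" using P jc v by simp
    moreover have vv: "v = fscale (inverse c) (cols ! j)" using jc by (simp add: fscale_fscale fscale_one)
    ultimately show "v \<in> ?f ` (?J \<times> (UNIV - {0}))"
    proof (intro image_eqI[where x="(j, inverse c)"])
      show "v = ?f (j, inverse c)" using vv by simp
      show "(j, inverse c) \<in> ?J \<times> (UNIV - {0})" using jc \<open>P (cols ! j)\<close> by simp
    qed
  qed
  have "card {v\<in>Out. P v} = card (?J \<times> (UNIV - {0::'a}))" using card_image[OF inj] img by simp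
  also have "\<dots> = card ?J * (card (UNIV::'a set) - 1)" by (simp add: card_cartesian_product card_Diff_subset)
  finally show ?thesis .
qed

lemma fvec_subspace: "fv.subspace (fvec k :: (nat \<Rightarrow> 'a::field) set)"
  unfolding fv.subspace_def by (simp add: fvec_def fscale_apply)

lemma dotp_zero: "dotp k x 0 = 0"
  by (simp add: dotp_def)

theorem corollary3p1:
  fixes k h :: nat
    and u :: "nat \<Rightarrow> nat"
    and U :: "nat \<Rightarrow> (nat \<Rightarrow> 'a::{finite,field}) set"
    and cols :: "(nat \<Rightarrow> 'a) list"
  defines "q \<equiv> card (UNIV :: 'a set)"
  assumes k3: "k \<ge> 3"
    and h2: "2 \<le> h" and hq: "h \<le> q"
    and u0: "1 \<le> u 0" and u01: "u 0 < u 1"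
    and umono: "\<forall>i. 1 \<le> i \<and> i < h \<longrightarrow> u i \<le> u (i + 1)"
    and Usub: "\<forall>i\<le>h. fv.subspace (U i) \<and> U i \<subseteq> fvec k \<and> fv.dim (U i) = u i"
    and Uint: "\<forall>i\<in>{1..h}. \<forall>j\<in>{1..h}. i \<noteq> j \<longrightarrow> U i \<inter> U j = U 0"
    and ineq: "int q ^ k - int q ^ (k - 1) >
               int q ^ u 0 - 1 + (\<Sum>i=1..h. (int q ^ u i - int q ^ u 0))"
    and cols_in: "\<forall>c\<in>set cols. c \<in> fvec k - {0} - (\<Union>i\<in>{1..h}. U i)"
    and cols_rep: "\<forall>v\<in>fvec k - {0} - (\<Union>i\<in>{1..h}. U i).
                     \<exists>!j. j < length cols \<and> (\<exists>c::'a. c \<noteq> 0 \<and> cols ! j = fscale c v)"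
    and ubig: "real (u 1) > real (h - 1) * (real q ^ u 0 - 1) / (real q - 1)"
  shows "distance_optimal (length cols) (gen_code k cols)"
proof -
  have q2: "2 \<le> q" unfolding q_def by (rule card_field_ge2)
  define UU where "UU = (\<Union>i\<in>{1..h}. U i)"
  define Out where "Out = fvec k - {0} - UU"
  define n where "n = length cols"
  have Usp: "fv.subspace (U i)" and Uf: "U i \<subseteq> fvec k" if "i \<le> h" for i
    using Usub that by auto
  have Ufin: "finite (U i)" if "i \<le> h" for i
    using Uf[OF that] finite_fvec finite_subset by blast
  have Ucard: "card (U i) = q ^ u i" if "i \<le> h" for i
    using card_subspace[OF Usp[OF that] Ufin[OF that]] Usub that by (simp add: q_def)
  have U0sub: "U 0 \<subseteq> U i" if i: "i \<in> {1..h}" for i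
  proof -
    define j where "j = (if i = 1 then 2 else (1::nat))"
    have j: "j \<in> {1..h}" "j \<noteq> i" using h2 i by (auto simp: j_def)
    have "U i \<inter> U j = U 0" using Uint i j by blast
    thus ?thesis by blast
  qed
  have uge: "u 1 \<le> u i" if i: "i \<in> {1..h}" for i
  proof -
    have "\<forall>i. 1 \<le> i \<longrightarrow> i \<le> h \<longrightarrow> u 1 \<le> u i"
    proof
      fix i show "1 \<le> i \<longrightarrow> i \<le> h \<longrightarrow> u 1 \<le> u i"
      proof (induction i)
        case 0 then show ?case by simp
      next
        case (Suc i)
        show ?case
        proof (cases "i = 0")
          case True then show ?thesis by simp
        next
          case False
          show ?thesis
          proof (intro impI)
            assume "Suc i \<le> h"
            hence "u 1 \<le> u i" "u i \<le> u (i + 1)" using Suc.IH False umono by auto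
            thus "u 1 \<le> u (Suc i)" by simp
          qed
        qed
      qed
    qed
    thus ?thesis using i by auto
  qed
  have ule: "u i \<le> k" if i: "i \<le> h" for i
  proof -
    have "card (U i) \<le> card (fvec k :: (nat \<Rightarrow> 'a) set)" using Uf[OF i] finite_fvec by (rule card_mono[rotated])
    hence "q ^ u i \<le> q ^ k" using Ucard[OF i] card_fvec[where 'a='a] q_def by simp
    thus ?thesis using q2 by (simp add: power_increasing_iff)
  qed
  have UUsub: "UU \<subseteq> fvec k" unfolding UU_def by (rule UN_least) (simp add: Uf)
  have UUfin: "finite UU" using UUsub finite_fvec finite_subset by blast
  have zUU: "0 \<in> UU" unfolding UU_def using fv.subspace_0[OF Usp[of 1]] h2 by force
  define Sig where "Sig = (\<Sum>i\<in>{1..h}. q ^ u i)"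
  have cardUU: "card UU = q ^ u 0 + (\<Sum>i\<in>{1..h}. (q ^ u i - q ^ u 0))"
  proof -
    have eq: "UU = U 0 \<union> (\<Union>i\<in>{1..h}. U i - U 0)"
      unfolding UU_def using U0sub h2 by fastforce
    have fin2: "finite (\<Union>i\<in>{1..h}. U i - U 0)" using Ufin by auto
    have "card UU = card (U 0) + card (\<Union>i\<in>{1..h}. U i - U 0)"
      unfolding eq by (rule card_Un_disjoint) (use Ufin fin2 in auto)
    also have "card (\<Union>i\<in>{1..h}. U i - U 0) = (\<Sum>i\<in>{1..h}. card (U i - U 0))"
    proof (rule card_UN_disjoint)
      show "finite {1..h}" by simp
      show "\<forall>i\<in>{1..h}. finite (U i - U 0)" using Ufin by auto
      show "\<forall>i\<in>{1..h}. \<forall>j\<in>{1..h}. i \<noteq> j \<longrightarrow> (U i - U 0) \<inter> (U j - U 0) = {}"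
        using Uint by blast
    qed
    also have "(\<Sum>i\<in>{1..h}. card (U i - U 0)) = (\<Sum>i\<in>{1..h}. (q ^ u i - q ^ u 0))"
    proof (rule sum.cong[OF refl])
      fix i assume i: "i \<in> {1..h}"
      show "card (U i - U 0) = q ^ u i - q ^ u 0"
        using card_Diff_subset[OF finite_subset[OF U0sub[OF i] Ufin[of i]] U0sub[OF i]] Ucard[of i] Ucard[of 0] i
        by auto
    qed
    finally show ?thesis using Ucard[of 0] by simp
  qed
  have pw0: "q ^ u 0 \<le> q ^ u i" if "i \<in> {1..h}" for i
    using uge[OF that] u01 q2 by (intro power_increasing) auto
  have cardUUi: "int (card UU) = int q ^ u 0 + (\<Sum>i=1..h. (int q ^ u i - int q ^ u 0))"
    using cardUU by (simp add: of_nat_sum of_nat_diff pw0)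
  define W where "W = (\<lambda>x::nat \<Rightarrow> 'a. \<lambda>j. if j < n then dotp k x (cols ! j) else 0)"
  have genW: "gen_code k cols = W ` fvec k" by (auto simp: gen_code_def W_def n_def)
  have W_add: "W (x + y) = W x + W y" for x y by (auto simp: W_def fun_eq_iff dotp_def sum.distrib algebra_simps)
  have W_diff: "W (x - y) = W x - W y" for x y by (auto simp: W_def fun_eq_iff dotp_def sum_subtractf algebra_simps)
  have W_scale: "W (fscale c x) = fscale c (W x)" for c x
    by (auto simp: W_def fun_eq_iff dotp_def fscale_apply sum_distrib_left algebra_simps)
  have W0: "W 0 = 0" by (auto simp: W_def fun_eq_iff dotp_def)
  have cin: "\<forall>c\<in>set cols. c \<in> Out" using cols_in by (simp add: Out_def UU_def)
  have crep: "\<forall>v\<in>Out. \<exists>!j. j < length cols \<and> (\<exists>c::'a. c \<noteq> 0 \<and> cols ! j = fscale c v)"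
    using cols_rep by (simp add: Out_def UU_def)
  have n0: "0 \<notin> Out" by (simp add: Out_def)
  have cl: "\<forall>v\<in>Out. \<forall>c::'a. c \<noteq> 0 \<longrightarrow> fscale c v \<in> Out"
  proof (intro ballI allI impI)
    fix v and c :: 'a assume v: "v \<in> Out" and c: "c \<noteq> 0"
    have "fscale c v \<in> fvec k" using v by (auto simp: Out_def fvec_def fscale_apply)
    moreover have "fscale c v \<noteq> 0"
    proof
      assume "fscale c v = 0"
      hence "fscale (inverse c) (fscale c v) = 0" by (simp add: fscale_zero_right)
      hence "v = 0" using c by (simp add: fscale_fscale fscale_one)
      thus False using v by (simp add: Out_def)
    qed
    moreover have "fscale c v \<notin> UU"
    proof
      assume "fscale c v \<in> UU"
      then obtain i where i: "i \<in> {1..h}" "fscale c v \<in> U i" by (auto simp: UU_def)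
      have ih: "i \<le> h" using i by simp
      have "fscale (inverse c) (fscale c v) \<in> U i" by (rule fv.subspace_scale[OF Usp[OF ih] i(2)])
      hence "v \<in> U i" using c by (simp add: fscale_fscale fscale_one)
      thus False using v i by (auto simp: Out_def UU_def)
    qed
    ultimately show "fscale c v \<in> Out" by (simp add: Out_def)
  qed
  have Out_eq: "Out = fvec k - UU" using zUU by (auto simp: Out_def)
  have cardOut: "card Out = q ^ k - card UU"
    unfolding Out_eq using card_Diff_subset[OF UUfin UUsub] card_fvec[where 'a='a] q_def by simp
  have nOut: "card Out = n * (q - 1)"
  proof -
    have "card {v\<in>Out. True} = card {j. j < length cols \<and> True} * (card (UNIV::'a set) - 1)"
      by (rule weight_count[OF cin crep cl n0]) simp
    thus ?thesis by (simp add: n_def q_def)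
  qed
  have wt: "int q * int (hweight (W x)) \<ge> int q ^ k - int Sig \<and> hweight (W x) > 0"
    if x: "x \<in> fvec k" "x \<noteq> 0" for x
  proof -
    let ?P = "\<lambda>v. dotp k x v \<noteq> 0"
    have hw: "hweight (W x) = card {j. j < length cols \<and> ?P (cols ! j)}"
      unfolding hweight_def W_def n_def by (rule arg_cong[where f=card]) auto
    have wc: "card {v\<in>Out. ?P v} = hweight (W x) * (q - 1)"
      unfolding hw q_def by (rule weight_count[OF cin crep cl n0]) (simp add: dotp_scale)
    define A where "A = {v\<in>fvec k. ?P v}"
    define B where "B = {v\<in>UU. ?P v}"
    have BA: "B \<subseteq> A" using UUsub by (auto simp: A_def B_def)
    have finA: "finite A" unfolding A_def by (rule finite_subset[OF _ finite_fvec[where 'a='a, of k]]) auto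
    have "{v\<in>Out. ?P v} = A - B" by (auto simp: Out_def A_def B_def dotp_zero)
    hence wAB: "hweight (W x) * (q - 1) = card A - card B"
      using wc card_Diff_subset[OF finite_subset[OF BA finA] BA] by simp
    obtain i0 where i0: "x i0 \<noteq> 0" using x(2) by (auto simp: fun_eq_iff)
    have i0k: "i0 < k" using x(1) i0 by (auto simp: fvec_def not_less[symmetric])
    define e where "e = (\<lambda>i. if i = i0 then (1::'a) else 0)"
    have e: "e \<in> fvec k" using i0k by (auto simp: e_def fvec_def)
    have de: "dotp k x e = x i0"
    proof -
      have "dotp k x e = (\<Sum>i<k. if i = i0 then x i else 0)"
        unfolding dotp_def e_def by (rule sum.cong) auto
      also have "\<dots> = x i0" using i0k by (simp add: sum.delta)
      finally show ?thesis .
    qed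
    have qA: "q * card A = (q - 1) * q ^ k"
      using card_nonkernel[of "fvec k" e k x, OF fvec_subspace finite_fvec e] de i0 card_fvec[where 'a='a]
      by (simp add: A_def q_def)
    have kpos: "k = Suc (k - 1)" using k3 by simp
    have cA: "card A = (q - 1) * q ^ (k - 1)"
    proof -
      have "q * card A = q * ((q - 1) * q ^ (k - 1))"
        using qA kpos by (metis mult.left_commute power_Suc)
      thus ?thesis using q2 by simp
    qed
    have "B = (\<Union>i\<in>{1..h}. {v\<in>U i. ?P v})" by (auto simp: B_def UU_def)
    hence "card B \<le> (\<Sum>i\<in>{1..h}. card {v\<in>U i. ?P v})" by (simp add: card_UN_le)
    hence "q * card B \<le> (\<Sum>i\<in>{1..h}. q * card {v\<in>U i. ?P v})" by (simp add: sum_distrib_left[symmetric])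
    also have "\<dots> \<le> (\<Sum>i\<in>{1..h}. (q - 1) * q ^ u i)"
    proof (rule sum_mono)
      fix i assume "i \<in> {1..h}"
      hence i: "i \<le> h" by simp
      show "q * card {v\<in>U i. ?P v} \<le> (q - 1) * q ^ u i"
        using nonkernel_le[OF Usp[OF i] Ufin[OF i], of k x] Ucard[OF i] by (simp add: q_def)
    qed
    also have "\<dots> = (q - 1) * Sig" by (simp add: Sig_def sum_distrib_left)
    finally have qB: "q * card B \<le> (q - 1) * Sig" .
    have Bl: "card B \<le> card A" using card_mono[OF finA BA] .
    have Q1: "int q - 1 > 0" using q2 by simp
    have q1': "1 \<le> q" using q2 by simp
    have e1: "int (hweight (W x)) * (int q - 1) = int (card A) - int (card B)"
    proof -
      have "int (hweight (W x) * (q - 1)) = int (card A - card B)" using wAB by (rule arg_cong)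
      thus ?thesis by (simp only: of_nat_mult of_nat_diff[OF Bl] of_nat_diff[OF q1'] of_nat_1)
    qed
    have e2: "int q * int (card A) = (int q - 1) * int q ^ k"
    proof -
      have "int (q * card A) = int ((q - 1) * q ^ k)" using qA by (rule arg_cong)
      thus ?thesis by (simp only: of_nat_mult of_nat_diff[OF q1'] of_nat_1 of_nat_power)
    qed
    have e3: "int q * int (card B) \<le> (int q - 1) * int Sig"
    proof -
      have "int (q * card B) \<le> int ((q - 1) * Sig)" using qB by (simp only: of_nat_le_iff)
      thus ?thesis by (simp only: of_nat_mult of_nat_diff[OF q1'] of_nat_1)
    qed
    have "(int q - 1) * (int q * int (hweight (W x))) = int q * (int (hweight (W x)) * (int q - 1))"
      by (simp only: mult_ac)
    also have "\<dots> = int q * (int (card A) - int (card B))" by (simp only: e1)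
    also have "\<dots> = int q * int (card A) - int q * int (card B)" by (rule right_diff_distrib)
    finally have e4: "(int q - 1) * (int q * int (hweight (W x))) = int q * int (card A) - int q * int (card B)" .
    have e5: "(int q - 1) * (int q ^ k - int Sig) = (int q - 1) * int q ^ k - (int q - 1) * int Sig"
      by (rule right_diff_distrib)
    have "(int q - 1) * (int q ^ k - int Sig) \<le> (int q - 1) * (int q * int (hweight (W x)))"
      using e2 e3 e4 e5 by linarith
    hence g1: "int q ^ k - int Sig \<le> int q * int (hweight (W x))" using Q1 by simp
    have "B \<subseteq> UU - {0}" by (auto simp: B_def dotp_zero)
    hence "card B \<le> card (UU - {0})" using UUfin by (intro card_mono) auto
    also have "\<dots> = card UU - 1" using zUU UUfin by simp
    finally have Bb0: "card B \<le> card UU - 1" .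
    have cu: "0 < card UU" using zUU UUfin by (auto simp: card_gt_0_iff)
    have "int (card B) \<le> int (card UU - 1)" using Bb0 by simp
    also have "int (card UU - 1) = int (card UU) - 1" using cu by (simp add: of_nat_diff)
    finally have Bb: "int (card B) \<le> int (card UU) - 1" .
    have "int (card A) = int q ^ k - int q ^ (k - 1)"
    proof -
      have "int (card A) = int ((q - 1) * q ^ (k - 1))" using cA by (rule arg_cong)
      hence "int (card A) = (int q - 1) * int q ^ (k - 1)" by (simp only: of_nat_mult of_nat_diff[OF q1'] of_nat_1 of_nat_power)
      also have "\<dots> = int q * int q ^ (k - 1) - int q ^ (k - 1)" by (simp add: algebra_simps)
      also have "int q * int q ^ (k - 1) = int q ^ k" by (simp only: power_Suc[symmetric] kpos[symmetric])
      finally show ?thesis .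
    qed
    hence "int (card A) > int (card UU) - 1" using ineq cardUUi by linarith
    hence "int (card A) - int (card B) > 0" using Bb by linarith
    hence "int (hweight (W x)) * (int q - 1) > 0" using e1 by linarith
    hence "int (hweight (W x)) > 0" using Q1 by (rule zero_less_mult_pos2)
    hence "hweight (W x) > 0" by simp
    thus ?thesis using g1 by simp
  qed
  have Winj: "inj_on W (fvec k)"
  proof (rule inj_onI)
    fix x y assume x: "x \<in> fvec k" and y: "y \<in> fvec k" and e: "W x = W y"
    show "x = y"
    proof (rule ccontr)
      assume "x \<noteq> y"
      hence "x - y \<noteq> 0" by simp
      moreover have "x - y \<in> fvec k" using x y by (simp add: fvec_def)
      ultimately have "hweight (W (x - y)) > 0" using wt by blast
      moreover have "W (x - y) = 0" using e by (simp add: W_diff)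
      ultimately show False by (simp add: hweight_def)
    qed
  qed
  define Cd where "Cd = gen_code k cols"
  have Cimg: "Cd = W ` fvec k" using genW by (simp add: Cd_def)
  have cardC: "card Cd = q ^ k" unfolding Cimg using card_image[OF Winj] card_fvec[where 'a='a] q_def by simp
  have Csub: "fv.subspace Cd"
    unfolding fv.subspace_def Cimg
  proof (intro conjI ballI allI)
    show "0 \<in> W ` fvec k" using W0 by (force simp: fvec_def)
  next
    fix a b assume "a \<in> W ` fvec k" "b \<in> W ` fvec k"
    then obtain x y where "x \<in> fvec k" "y \<in> fvec k" "a = W x" "b = W y" by auto
    thus "a + b \<in> W ` fvec k" using W_add by (auto simp: fvec_def intro!: image_eqI[where x="x+y"])
  next
    fix c a assume "a \<in> W ` fvec k"
    then obtain x where "x \<in> fvec k" "a = W x" by auto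
    thus "fscale c a \<in> W ` fvec k" using W_scale by (auto simp: fvec_def fscale_apply intro!: image_eqI[where x="fscale c x"])
  qed
  have Cvec: "Cd \<subseteq> fvec n" unfolding Cimg by (auto simp: W_def fvec_def)
  have finC: "finite Cd" using Cvec finite_fvec finite_subset by blast
  have dimC: "fv.dim Cd = k"
  proof -
    have "q ^ fv.dim Cd = q ^ k" using card_subspace[OF Csub finC] cardC q_def by simp
    thus ?thesis using q2 by (simp add: power_inject_exp)
  qed
  have linC: "linear_code n Cd" by (simp add: linear_code_def Csub Cvec)
  have mdC: "int q ^ k - int Sig \<le> int q * int (min_dist Cd)"
  proof -
    define e0 where "e0 = (\<lambda>i::nat. if i = 0 then (1::'a) else 0)"
    have e0: "e0 \<in> fvec k" "e0 \<noteq> 0" using k3 by (auto simp: e0_def fvec_def fun_eq_iff)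
    have "hweight (W e0) > 0" using wt[OF e0] by simp
    hence "W e0 \<noteq> 0" by (auto simp: hweight_def)
    hence ne: "Cd - {0} \<noteq> {}" using e0 Cimg by blast
    have "min_dist Cd \<in> hweight ` (Cd - {0})" unfolding min_dist_def using ne finC by (intro Min_in) auto
    then obtain v where v: "v \<in> Cd" "v \<noteq> 0" "min_dist Cd = hweight v" by auto
    then obtain x where x: "x \<in> fvec k" "v = W x" using Cimg by auto
    have "x \<noteq> 0" using x v W0 by auto
    thus ?thesis using wt[OF x(1) \<open>x \<noteq> 0\<close>] v x by simp
  qed
  have pw: "q ^ u 0 \<le> q ^ u i" if "i \<in> {1..h}" for i
    using uge[OF that] u01 q2 by (intro power_increasing) auto
  have cardUUr: "real (card UU) = real q ^ u 0 + (\<Sum>i=1..h. (real q ^ u i - real q ^ u 0))"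
    using cardUU by (simp add: of_nat_sum of_nat_diff pw)
  have Sigr: "real Sig = (\<Sum>i=1..h. real q ^ u i)" by (simp add: Sig_def of_nat_sum)
  show ?thesis
    unfolding distance_optimal_def Cd_def[symmetric] n_def[symmetric]
  proof (intro conjI notI)
    show "linear_code n Cd" by (rule linC)
  next
    assume "\<exists>C'::(nat \<Rightarrow> 'a) set. is_nkd_code n (fv.dim Cd) (min_dist Cd + 1) C'"
    then obtain C' :: "(nat \<Rightarrow> 'a) set" where C': "linear_code n C'" "fv.dim C' = k" "min_dist C' = min_dist Cd + 1"
      using dimC by (auto simp: is_nkd_code_def)
    have C'sub: "fv.subspace C'" and C'vec: "C' \<subseteq> sfun {..<n}" using C'(1) by (auto simp: linear_code_def fvec_sfun)
    have finC': "finite C'" using C'vec sfun_finite[of "{..<n}"] finite_subset by blast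
    have cardC': "card C' = card (UNIV::'a set) ^ k" using card_subspace[OF C'sub finC'] C'(2) by simp
    define D where "D = (real q ^ k - (\<Sum>i=1..h. real q ^ u i)) / real q + 1"
    have Dle: "D \<le> real (min_dist Cd) + 1"
    proof -
      have "real_of_int (int q ^ k - int Sig) \<le> real_of_int (int q * int (min_dist Cd))"
        using mdC by (simp only: of_int_le_iff)
      hence "real q ^ k - real Sig \<le> real q * real (min_dist Cd)" by simp
      hence "(real q ^ k - real Sig) / real q \<le> real (min_dist Cd)" using q2 by (simp add: divide_le_eq mult.commute)
      thus ?thesis unfolding D_def Sigr by simp
    qed
    have wts: "\<forall>v\<in>C'-{0}. D \<le> real (hweight v)"
    proof
      fix v assume v: "v \<in> C' - {0}"
      have "min_dist C' \<le> hweight v" unfolding min_dist_def using v finC' by (intro Min_le) auto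
      thus "D \<le> real (hweight v)" using Dle C'(3) by simp
    qed
    have G: "(\<Sum>j<k. ceiling (D / real (card (UNIV::'a set)) ^ j)) \<le> int (card {..<n})"
      by (rule griesmer[OF _ C'sub C'vec cardC' wts]) simp
    have GA: "(real q - 1) * (\<Sum>j<k. real_of_int (ceiling (D / real q ^ j))) \<ge>
       real q ^ k - 1 - (\<Sum>i=1..h. (real q ^ u i - 1)) + (real q - 1) * real (u 1)"
      by (rule griesmer_arith[OF q2 hq _ ule D_def]) (use uge ule h2 in auto)
    have Gr: "(\<Sum>j<k. real_of_int (ceiling (D / real q ^ j))) \<le> real n"
      using G unfolding q_def[symmetric] by (simp add: of_int_sum[symmetric] del: of_int_sum)
    have nr: "(real q - 1) * real n = real q ^ k - real q ^ u 0 - (\<Sum>i=1..h. (real q ^ u i - real q ^ u 0))"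
    proof -
      have "real (card Out) = real n * (real q - 1)" using nOut q2 by (simp add: of_nat_diff)
      moreover have "real (card Out) = real q ^ k - real (card UU)"
      proof -
        have "card UU \<le> q ^ k" using card_mono[OF finite_fvec UUsub] card_fvec[where 'a='a] q_def by simp
        thus ?thesis using cardOut by (simp add: of_nat_diff)
      qed
      ultimately show ?thesis using cardUUr by (simp add: algebra_simps)
    qed
    have ub: "(real q - 1) * real (u 1) > real (h - 1) * (real q ^ u 0 - 1)"
      using ubig q2 by (simp add: pos_divide_less_eq mult.commute)
    have sh: "(\<Sum>i=1..h. (real q ^ u i - 1)) = (\<Sum>i=1..h. (real q ^ u i - real q ^ u 0)) + real h * (real q ^ u 0 - 1)"
    proof -
      have "(\<Sum>i=1..h. (real q ^ u i - 1)) = (\<Sum>i=1..h. ((real q ^ u i - real q ^ u 0) + (real q ^ u 0 - 1)))"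
        by (rule sum.cong) simp_all
      also have "\<dots> = (\<Sum>i=1..h. (real q ^ u i - real q ^ u 0)) + real h * (real q ^ u 0 - 1)"
        by (simp only: sum.distrib) simp
      finally show ?thesis .
    qed
    have hr: "real (h - 1) = real h - 1" using h2 by (simp add: of_nat_diff)
    have hid: "real h * (real q ^ u 0 - 1) = (real h - 1) * (real q ^ u 0 - 1) + (real q ^ u 0 - 1)"
      by (simp add: algebra_simps)
    have "(real q - 1) * real n < (real q - 1) * (\<Sum>j<k. real_of_int (ceiling (D / real q ^ j)))"
    proof -
      have ub': "(real h - 1) * (real q ^ u 0 - 1) < (real q - 1) * real (u 1)" using ub hr by simp
      show ?thesis using GA nr ub' sh hid by linarith
    qed
    hence "real n < (\<Sum>j<k. real_of_int (ceiling (D / real q ^ j)))" using q2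
      by (simp add: mult_less_cancel_left)
    thus False using Gr by simp
  qed
qed

end
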